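(* Assume (A2). Then for every $n\ge0$ and all $(x,t)\in K_{R^*,T^*}$, $\phi_{n+1}(x,t)\ge\phi_n(x,t)\ge0$ and $\psi_{n+1}(x,t)\ge\psi_n(x,t)\ge0$.
   Context: Let $p>1$ and $\mu>0$ with $p<1+2/\mu$, and let $R^*,T^*>0$. Write $B_R=\{x\in\mathbb{R}:|x|<R\}$. Fix constants $\gamma_1,\gamma_2>0$ with $\gamma_1+\gamma_2>\max\big(1,(\mu p 2^p)^{1/(p-1)}\big)$ (standing assumption). Let $f,g$ be real functions on $\mathbb{R}$. Assumption (A2): $f\ge\gamma_1$ and $g\ge\gamma_2$ on $B_{R^*+T^*}$. Let $K_{R^*,T^*}=\{(x,t):t>0,\ |x-x_0|<T^*-t\ \text{for some } x_0\in B_{R^*}\}$. Define iterates $\phi_0\equiv\gamma_1$, $\psi_0\equiv\gamma_2$ and, with $\mathcal{N}_n(x,s)=2^{-p}|\phi_n+\psi_n|^p(x,s)-\frac{\mu}{1+s}\frac{(\phi_n+\psi_n)(x,s)}{2}$, $\phi_{n+1}(x,t)=f(x+t)+\int_0^t\mathcal{N}_n(x+t-s,s)\,ds$, $\psi_{n+1}(x,t)=g(x-t)+\int_0^t\mathcal{N}_n(x-t+s,s)\,ds$. *)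

theory Defs
  imports "HOL-Analysis.Analysis"
begin

definition Nl :: "real \<Rightarrow> real \<Rightarrow> (real \<Rightarrow> real \<Rightarrow> real) \<Rightarrow> (real \<Rightarrow> real \<Rightarrow> real)
                   \<Rightarrow> real \<Rightarrow> real \<Rightarrow> real" where
  "Nl p \<mu> \<phi> \<psi> x s =
     2 powr (-p) * \<bar>\<phi> x s + \<psi> x s\<bar> powr p - \<mu> / (1 + s) * ((\<phi> x s + \<psi> x s) / 2)"

primrec iter :: "real \<Rightarrow> real \<Rightarrow> real \<Rightarrow> real \<Rightarrow> (real \<Rightarrow> real) \<Rightarrow> (real \<Rightarrow> real) \<Rightarrow> nat
                 \<Rightarrow> (real \<Rightarrow> real \<Rightarrow> real) \<times> (real \<Rightarrow> real \<Rightarrow> real)" where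
  "iter p \<mu> \<gamma>1 \<gamma>2 f g 0 = ((\<lambda>x t. \<gamma>1), (\<lambda>x t. \<gamma>2))"
| "iter p \<mu> \<gamma>1 \<gamma>2 f g (Suc n) =
     (let \<phi> = fst (iter p \<mu> \<gamma>1 \<gamma>2 f g n); \<psi> = snd (iter p \<mu> \<gamma>1 \<gamma>2 f g n) in
      ((\<lambda>x t. f (x + t) + integral {0..t} (\<lambda>s. Nl p \<mu> \<phi> \<psi> (x + t - s) s)),
       (\<lambda>x t. g (x - t) + integral {0..t} (\<lambda>s. Nl p \<mu> \<phi> \<psi> (x - t + s) s))))"

definition Kset :: "real \<Rightarrow> real \<Rightarrow> (real \<times> real) set" where
  "Kset R T = {(x, t). t > 0 \<and> (\<exists>x0. \<bar>x0\<bar> < R \<and> \<bar>x - x0\<bar> < T - t)}"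

end

theory Submission imports Defs begin

lemma gam_pow:
  fixes p \<mu> \<gamma> :: real
  assumes "p > 1" "\<mu> > 0" "\<gamma> > (\<mu> * p * 2 powr p) powr (1 / (p - 1))"
  shows "\<gamma> powr (p - 1) > \<mu> * p * 2 powr p"
proof -
  have a: "\<mu> * p * 2 powr p > 0" using assms by simp
  have "((\<mu> * p * 2 powr p) powr (1 / (p - 1))) powr (p-1) < \<gamma> powr (p-1)"
    by (rule powr_less_mono2) (use assms in auto)
  also have "((\<mu> * p * 2 powr p) powr (1 / (p - 1))) powr (p-1) = \<mu> * p * 2 powr p"
    using assms a by (simp add: powr_powr)
  finally show ?thesis .
qed

lemma N_mono:
  fixes p \<mu> \<gamma> u v s :: real
  assumes "p > 1" "\<mu> > 0" "\<gamma> powr (p - 1) > \<mu> * p * 2 powr p" "\<gamma> > 0"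
    and "\<gamma> \<le> u" "u \<le> v" "s \<ge> 0"
  shows "2 powr (-p) * \<bar>u\<bar> powr p - \<mu> / (1 + s) * (u / 2) \<le> 2 powr (-p) * \<bar>v\<bar> powr p - \<mu> / (1 + s) * (v / 2)"
proof -
  define c where "c = \<mu> / (1 + s) / 2"
  define F where "F w = 2 powr (-p) * w powr p - c * w" for w
  have "F u \<le> F v"
  proof (rule DERIV_nonneg_imp_nondecreasing[OF assms(6)])
    fix w assume w1: "u \<le> w" and w2: "w \<le> v"
    note w = w1 w2
    hence wp: "w > 0" using assms by linarith
    have d: "(F has_real_derivative (2 powr (-p) * (p * w powr (p - 1)) - c)) (at w)"
      using wp unfolding F_def
      by (auto intro!: derivative_eq_intros)
    have "w powr (p-1) \<ge> \<gamma> powr (p-1)"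
      using w assms by (intro powr_mono2) auto
    hence "w powr (p-1) > \<mu> * p * 2 powr p" using assms by linarith
    hence "2 powr (-p) * (p * w powr (p - 1)) \<ge> 2 powr (-p) * (p * (\<mu> * p * 2 powr p))"
      using assms by (intro mult_left_mono) auto
    also have "2 powr (-p) * (p * (\<mu> * p * 2 powr p)) = \<mu> * p * p * (2 powr (-p) * 2 powr p)"
      by (simp only: mult_ac)
    also have "\<dots> = \<mu> * p * p"
      by (simp add: powr_add [symmetric])
    also have "\<mu> * p * p \<ge> \<mu>"
    proof -
      have "1 * 1 \<le> p * p" using assms(1) by (intro mult_mono) auto
      hence "\<mu> * 1 \<le> \<mu> * (p * p)" using assms(2) by (intro mult_left_mono) auto
      thus ?thesis by (simp add: mult.assoc)
    qed
    finally have "2 powr (-p) * (p * w powr (p - 1)) \<ge> \<mu>" .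
    moreover have "c \<le> \<mu>"
      using assms by (simp add: c_def field_simps)
    ultimately show "\<exists>y. (F has_real_derivative y) (at w) \<and> 0 \<le> y" using d by (intro exI conjI) auto
  qed
  thus ?thesis using assms unfolding F_def c_def by simp
qed

lemma N_pos:
  fixes p \<mu> \<gamma> s :: real
  assumes "p > 1" "\<mu> > 0" "\<gamma> powr (p - 1) > \<mu> * p * 2 powr p" "\<gamma> > 0" "s \<ge> 0"
  shows "0 \<le> 2 powr (-p) * \<bar>\<gamma>\<bar> powr p - \<mu> / (1 + s) * (\<gamma> / 2)"
proof -
  have "\<gamma> powr p = \<gamma> * \<gamma> powr (p - 1)" using assms by (simp add: powr_diff)
  also have "\<dots> \<ge> \<gamma> * (\<mu> * p * 2 powr p)" using assms by (intro mult_left_mono) auto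
  finally have "2 powr (-p) * \<gamma> powr p \<ge> 2 powr (-p) * (\<gamma> * (\<mu> * p * 2 powr p))" by simp
  also have "2 powr (-p) * (\<gamma> * (\<mu> * p * 2 powr p)) = \<gamma> * \<mu> * p * (2 powr (-p) * 2 powr p)"
    by (simp only: mult_ac)
  also have "\<dots> = \<gamma> * \<mu> * p" by (simp add: powr_add [symmetric])
  finally have A: "2 powr (-p) * \<gamma> powr p \<ge> \<gamma> * \<mu> * p" .
  have "\<gamma> * \<mu> * p \<ge> \<gamma> * \<mu>" using assms by (simp add: less_eq_real_def)
  moreover have "\<mu> / (1 + s) * (\<gamma> / 2) \<le> \<gamma> * \<mu>" using assms by (simp add: field_simps)
  ultimately show ?thesis using A assms by linarith
qed

lemma subst01:
  fixes h :: "real \<Rightarrow> real" and t :: real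
  assumes "t \<ge> 0"
  shows "integral {0..t} h = t * integral {0..1} (\<lambda>u. h (t * u))"
proof (cases "t = 0")
  case True thus ?thesis by simp
next
  case False
  hence tp: "t > 0" using assms by simp
  have img: "(\<lambda>x. x / t) ` {0..t} = {0..1}"
    using tp by (auto simp: image_iff field_simps intro!: bexI[where x="t * _"])
  from integral_stretch_real[where m=t and f=h and a=0 and b=t] tp img
  have "integral {0..1} (\<lambda>x. h (t * x)) = (1 / t) * integral {0..t} h" by simp
  thus ?thesis using tp by simp
qed

definition DD :: "real \<Rightarrow> real \<Rightarrow> (real \<times> real) set" where
  "DD R T = {(x, t). 0 \<le> t \<and> (\<exists>x0. \<bar>x0\<bar> < R \<and> \<bar>x - x0\<bar> < T - t)}"

lemma Nl_cont:
  assumes "continuous_on S (\<lambda>z. \<phi> (fst z) (snd z))" "continuous_on S (\<lambda>z. \<psi> (fst z) (snd z))"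
    and "p > 0" and "\<forall>z\<in>S. snd z \<ge> 0"
  shows "continuous_on S (\<lambda>z. Nl p \<mu> \<phi> \<psi> (fst z) (snd z))"
  unfolding Nl_def
  using assms
  by (intro continuous_intros continuous_on_powr') (auto simp: add_nonneg_eq_0_iff)

lemma DD_char:
  assumes "z \<in> DD R T" "u \<in> {0..1}" "\<bar>\<sigma>\<bar> = 1"
  shows "(fst z + \<sigma> * snd z - \<sigma> * (snd z * u), snd z * u) \<in> DD R T"
proof -
  obtain x t x0 where z: "z = (x,t)" "0 \<le> t" "\<bar>x0\<bar> < R" "\<bar>x - x0\<bar> < T - t"
    using assms(1) unfolding DD_def by auto
  have "\<bar>x + \<sigma> * t - \<sigma> * (t * u) - x0\<bar> \<le> \<bar>x - x0\<bar> + \<bar>\<sigma>\<bar> * \<bar>t - t*u\<bar>"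
    by (metis abs_mult abs_triangle_ineq add_diff_eq diff_add_eq right_diff_distrib)
  also have "\<bar>t - t*u\<bar> = t - t*u" using z assms(2) by (simp add: mult_left_le)
  finally have "\<bar>x + \<sigma> * t - \<sigma> * (t * u) - x0\<bar> < T - t*u" using z assms by simp
  thus ?thesis using z assms unfolding DD_def by auto
qed

lemma DD_bound:
  assumes "z \<in> DD R T" "\<bar>\<sigma>\<bar> = 1"
  shows "\<bar>fst z + \<sigma> * snd z\<bar> < R + T"
proof -
  obtain x t x0 where z: "z = (x,t)" "0 \<le> t" "\<bar>x0\<bar> < R" "\<bar>x - x0\<bar> < T - t"
    using assms(1) unfolding DD_def by auto
  have "\<bar>x + \<sigma> * t\<bar> \<le> \<bar>x0\<bar> + \<bar>x - x0\<bar> + \<bar>\<sigma>\<bar> * \<bar>t\<bar>"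
    by (metis abs_mult abs_triangle_ineq add.commute diff_add_cancel order_trans add_right_mono)
  thus ?thesis using z assms by simp
qed

lemma step_cont:
  fixes N :: "real \<Rightarrow> real \<Rightarrow> real" and f :: "real \<Rightarrow> real"
  assumes sig: "\<bar>\<sigma>\<bar> = 1"
    and Nc: "continuous_on (DD R T) (\<lambda>z. N (fst z) (snd z))"
    and fc: "continuous_on {x. \<bar>x\<bar> < R + T} f"
  shows "continuous_on (DD R T) (\<lambda>z. f (fst z + \<sigma> * snd z) + integral {0..snd z} (\<lambda>s. N (fst z + \<sigma> * snd z - \<sigma> * s) s))"
proof -
  have eq: "f (fst z + \<sigma> * snd z) + integral {0..snd z} (\<lambda>s. N (fst z + \<sigma> * snd z - \<sigma> * s) s)
      = f (fst z + \<sigma> * snd z) + snd z * integral (cbox 0 1) (\<lambda>u. N (fst z + \<sigma> * snd z - \<sigma> * (snd z * u)) (snd z * u))"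
    if "z \<in> DD R T" for z
  proof -
    have "snd z \<ge> 0" using that unfolding DD_def by auto
    from subst01[OF this, of "\<lambda>s. N (fst z + \<sigma> * snd z - \<sigma> * s) s"]
    show ?thesis by simp
  qed
  have m1: "(\<lambda>z. fst z + \<sigma> * snd z) ` DD R T \<subseteq> {x. \<bar>x\<bar> < R + T}"
    using DD_bound[OF _ sig] by blast
  have k1: "continuous_on (DD R T) (\<lambda>z. fst z + \<sigma> * snd z)"
    by (intro continuous_intros)
  have c1: "continuous_on (DD R T) (\<lambda>z. f (fst z + \<sigma> * snd z))"
    using continuous_on_compose2[OF fc k1 m1] .
  have m2: "(\<lambda>w. (fst (fst w) + \<sigma> * snd (fst w) - \<sigma> * (snd (fst w) * snd w), snd (fst w) * snd w)) ` (DD R T \<times> cbox 0 1) \<subseteq> DD R T"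
  proof
    fix y assume "y \<in> (\<lambda>w. (fst (fst w) + \<sigma> * snd (fst w) - \<sigma> * (snd (fst w) * snd w), snd (fst w) * snd w)) ` (DD R T \<times> cbox 0 1)"
    then obtain z u where zu: "z \<in> DD R T" "u \<in> {0..1}"
      and y: "y = (fst z + \<sigma> * snd z - \<sigma> * (snd z * u), snd z * u)" by auto
    show "y \<in> DD R T" unfolding y by (rule DD_char[OF zu sig])
  qed
  have k2: "continuous_on (DD R T \<times> cbox 0 1) (\<lambda>w. (fst (fst w) + \<sigma> * snd (fst w) - \<sigma> * (snd (fst w) * snd w), snd (fst w) * snd w))"
    by (intro continuous_intros)
  have c2': "continuous_on (DD R T \<times> cbox 0 1) (\<lambda>w. N (fst (fst w) + \<sigma> * snd (fst w) - \<sigma> * (snd (fst w) * snd w)) (snd (fst w) * snd w))"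
    using continuous_on_compose2[OF Nc k2 m2] by simp
  have c2: "continuous_on (DD R T \<times> cbox 0 1) (\<lambda>(z, u). N (fst z + \<sigma> * snd z - \<sigma> * (snd z * u)) (snd z * u))"
    using c2' by (simp add: case_prod_beta)
  have c3: "continuous_on (DD R T) (\<lambda>z. integral (cbox 0 1) (\<lambda>u. N (fst z + \<sigma> * snd z - \<sigma> * (snd z * u)) (snd z * u)))"
    by (rule integral_continuous_on_param[OF c2])
  have c4: "continuous_on (DD R T) (\<lambda>z. f (fst z + \<sigma> * snd z) + snd z * integral (cbox 0 1) (\<lambda>u. N (fst z + \<sigma> * snd z - \<sigma> * (snd z * u)) (snd z * u)))"
    by (intro continuous_intros c1 c3)
  show ?thesis
    using continuous_on_cong[OF refl eq, of "DD R T"] c4 by simp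
qed

lemma DD_char2:
  assumes "z \<in> DD R T" "s \<in> {0..snd z}" "\<bar>\<sigma>\<bar> = 1"
  shows "(fst z + \<sigma> * snd z - \<sigma> * s, s) \<in> DD R T"
proof -
  obtain x t x0 where z: "z = (x,t)" "0 \<le> t" "\<bar>x0\<bar> < R" "\<bar>x - x0\<bar> < T - t"
    using assms(1) unfolding DD_def by auto
  have "\<bar>x + \<sigma> * t - \<sigma> * s - x0\<bar> \<le> \<bar>x - x0\<bar> + \<bar>\<sigma>\<bar> * \<bar>t - s\<bar>"
    by (metis abs_mult abs_triangle_ineq add_diff_eq diff_add_eq right_diff_distrib)
  also have "\<bar>t - s\<bar> = t - s" using z assms(2) by simp
  finally have "\<bar>x + \<sigma> * t - \<sigma> * s - x0\<bar> < T - s" using z assms by simp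
  thus ?thesis using z assms unfolding DD_def by auto
qed

lemma integrable_char:
  fixes N :: "real \<Rightarrow> real \<Rightarrow> real"
  assumes "continuous_on (DD R T) (\<lambda>z. N (fst z) (snd z))" "z \<in> DD R T" "\<bar>\<sigma>\<bar> = 1"
  shows "(\<lambda>s. N (fst z + \<sigma> * snd z - \<sigma> * s) s) integrable_on {0..snd z}"
proof -
  have m: "(\<lambda>s. (fst z + \<sigma> * snd z - \<sigma> * s, s)) ` {0..snd z} \<subseteq> DD R T"
    using DD_char2[OF assms(2) _ assms(3)] by auto
  have c: "continuous_on {0..snd z} (\<lambda>s. (fst z + \<sigma> * snd z - \<sigma> * s, s))"
    by (intro continuous_intros)
  have "continuous_on {0..snd z} (\<lambda>s. N (fst z + \<sigma> * snd z - \<sigma> * s) s)"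
    using continuous_on_compose2[OF assms(1) c m] by simp
  thus ?thesis by (rule integrable_continuous_interval)
qed

theorem lemma4p1:
  fixes p \<mu> R T \<gamma>1 \<gamma>2 :: real and f g :: "real \<Rightarrow> real"
  assumes "p > 1" and "\<mu> > 0" and "p < 1 + 2 / \<mu>"
    and "R > 0" and "T > 0"
    and "\<gamma>1 > 0" and "\<gamma>2 > 0"
    and "\<gamma>1 + \<gamma>2 > max 1 ((\<mu> * p * 2 powr p) powr (1 / (p - 1)))"
    and "continuous_on {x. \<bar>x\<bar> < R + T} f" and "continuous_on {x. \<bar>x\<bar> < R + T} g"
    and "\<forall>x. \<bar>x\<bar> < R + T \<longrightarrow> f x \<ge> \<gamma>1 \<and> g x \<ge> \<gamma>2"
  shows "\<forall>n. \<forall>(x, t) \<in> Kset R T.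
     fst (iter p \<mu> \<gamma>1 \<gamma>2 f g (Suc n)) x t \<ge> fst (iter p \<mu> \<gamma>1 \<gamma>2 f g n) x t
   \<and> fst (iter p \<mu> \<gamma>1 \<gamma>2 f g n) x t \<ge> 0
   \<and> snd (iter p \<mu> \<gamma>1 \<gamma>2 f g (Suc n)) x t \<ge> snd (iter p \<mu> \<gamma>1 \<gamma>2 f g n) x t
   \<and> snd (iter p \<mu> \<gamma>1 \<gamma>2 f g n) x t \<ge> 0"
proof -
  define \<Phi> where "\<Phi> n = fst (iter p \<mu> \<gamma>1 \<gamma>2 f g n)" for n
  define \<Psi> where "\<Psi> n = snd (iter p \<mu> \<gamma>1 \<gamma>2 f g n)" for n
  define D where "D = DD R T"
  have \<Phi>0: "\<Phi> 0 = (\<lambda>x t. \<gamma>1)" and \<Psi>0: "\<Psi> 0 = (\<lambda>x t. \<gamma>2)" by (simp_all add: \<Phi>_def \<Psi>_def)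
  have \<Phi>S: "\<Phi> (Suc n) x t = f (x + 1 * t) + integral {0..t} (\<lambda>s. Nl p \<mu> (\<Phi> n) (\<Psi> n) (x + 1 * t - 1 * s) s)" for n x t
    by (simp add: \<Phi>_def \<Psi>_def Let_def)
  have \<Psi>S: "\<Psi> (Suc n) x t = g (x + -1 * t) + integral {0..t} (\<lambda>s. Nl p \<mu> (\<Phi> n) (\<Psi> n) (x + -1 * t - -1 * s) s)" for n x t
    by (simp add: \<Phi>_def \<Psi>_def Let_def)
  have Dnn: "\<forall>z\<in>D. snd z \<ge> 0" by (auto simp: D_def DD_def)
  have p0: "p > 0" using assms by simp
  have cont: "continuous_on D (\<lambda>z. \<Phi> n (fst z) (snd z)) \<and> continuous_on D (\<lambda>z. \<Psi> n (fst z) (snd z))" for n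
  proof (induction n)
    case 0 show ?case by (simp add: \<Phi>0 \<Psi>0)
  next
    case (Suc n)
    have Nc: "continuous_on (DD R T) (\<lambda>z. Nl p \<mu> (\<Phi> n) (\<Psi> n) (fst z) (snd z))"
      using Nl_cont[OF Suc[THEN conjunct1] Suc[THEN conjunct2] p0 Dnn] by (simp add: D_def)
    show ?case
      unfolding \<Phi>S \<Psi>S D_def
      using step_cont[OF _ Nc assms(9), of 1] step_cont[OF _ Nc assms(10), of "-1"] by simp
  qed
  have Ncont: "continuous_on (DD R T) (\<lambda>z. Nl p \<mu> (\<Phi> n) (\<Psi> n) (fst z) (snd z))" for n
    using Nl_cont[OF cont[THEN conjunct1] cont[THEN conjunct2] p0 Dnn] by (simp add: D_def)
  have int1: "(\<lambda>s. Nl p \<mu> (\<Phi> n) (\<Psi> n) (x + 1 * t - 1 * s) s) integrable_on {0..t}" if "(x,t) \<in> D" for n x t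
    using integrable_char[OF Ncont, of "(x,t)" 1] that by (simp add: D_def)
  have int2: "(\<lambda>s. Nl p \<mu> (\<Phi> n) (\<Psi> n) (x + -1 * t - -1 * s) s) integrable_on {0..t}" if "(x,t) \<in> D" for n x t
    using integrable_char[OF Ncont, of "(x,t)" "-1"] that by (simp add: D_def)
  have mem1: "(x + 1 * t - 1 * s, s) \<in> D" if "(x,t) \<in> D" "s \<in> {0..t}" for x t s
    using DD_char2[of "(x,t)" R T s 1] that by (simp add: D_def)
  have mem2: "(x + -1 * t - -1 * s, s) \<in> D" if "(x,t) \<in> D" "s \<in> {0..t}" for x t s
    using DD_char2[of "(x,t)" R T s "-1"] that by (simp add: D_def)
  have bnd1: "f (x + 1 * t) \<ge> \<gamma>1" and bnd2: "g (x + -1 * t) \<ge> \<gamma>2" if "(x,t) \<in> D" for x t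
    using DD_bound[of "(x,t)" R T 1] DD_bound[of "(x,t)" R T "-1"] that assms(11) by (auto simp: D_def)
  define \<gamma> where "\<gamma> = \<gamma>1 + \<gamma>2"
  have gp: "\<gamma> > 0" using assms by (simp add: \<gamma>_def)
  have gpow: "\<gamma> powr (p - 1) > \<mu> * p * 2 powr p"
    using gam_pow[of p \<mu> \<gamma>] assms by (simp add: \<gamma>_def)
  have Npos: "Nl p \<mu> (\<Phi> 0) (\<Psi> 0) y s \<ge> 0" if "s \<ge> 0" for y s
    using N_pos[OF assms(1,2) gpow gp that] by (simp add: Nl_def \<Phi>0 \<Psi>0 \<gamma>_def)
  have Nmono: "Nl p \<mu> (\<Phi> n) (\<Psi> n) y s \<le> Nl p \<mu> (\<Phi> (Suc n)) (\<Psi> (Suc n)) y s"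
    if "s \<ge> 0" "\<gamma> \<le> \<Phi> n y s + \<Psi> n y s" "\<Phi> n y s + \<Psi> n y s \<le> \<Phi> (Suc n) y s + \<Psi> (Suc n) y s" for n y s
    using N_mono[OF assms(1,2) gpow gp that(2,3,1)] by (simp add: Nl_def)
  have mono: "\<forall>z\<in>D. \<Phi> n (fst z) (snd z) \<le> \<Phi> (Suc n) (fst z) (snd z) \<and> \<gamma>1 \<le> \<Phi> n (fst z) (snd z)
      \<and> \<Psi> n (fst z) (snd z) \<le> \<Psi> (Suc n) (fst z) (snd z) \<and> \<gamma>2 \<le> \<Psi> n (fst z) (snd z)" for n
  proof (induction n)
    case 0
    show ?case
    proof (clarify)
      fix x t assume xt: "(x,t) \<in> D"
      have t0: "t \<ge> 0" using xt Dnn by auto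
      have i1: "integral {0..t} (\<lambda>s. Nl p \<mu> (\<Phi> 0) (\<Psi> 0) (x + 1 * t - 1 * s) s) \<ge> 0"
        by (rule integral_nonneg[OF int1[OF xt]]) (auto intro: Npos)
      have i2: "integral {0..t} (\<lambda>s. Nl p \<mu> (\<Phi> 0) (\<Psi> 0) (x + -1 * t - -1 * s) s) \<ge> 0"
        by (rule integral_nonneg[OF int2[OF xt]]) (auto intro: Npos)
      show "\<Phi> 0 (fst (x, t)) (snd (x, t)) \<le> \<Phi> (Suc 0) (fst (x, t)) (snd (x, t)) \<and> \<gamma>1 \<le> \<Phi> 0 (fst (x, t)) (snd (x, t))
        \<and> \<Psi> 0 (fst (x, t)) (snd (x, t)) \<le> \<Psi> (Suc 0) (fst (x, t)) (snd (x, t)) \<and> \<gamma>2 \<le> \<Psi> 0 (fst (x, t)) (snd (x, t))"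
        using i1 i2 bnd1[OF xt] bnd2[OF xt] unfolding fst_conv snd_conv \<Phi>S \<Psi>S
        by (simp add: \<Phi>0 \<Psi>0)
    qed
  next
    case (Suc n)
    show ?case
    proof (clarify)
      fix x t assume xt: "(x,t) \<in> D"
      have t0: "t \<ge> 0" using xt Dnn by auto
      have le: "Nl p \<mu> (\<Phi> n) (\<Psi> n) y s \<le> Nl p \<mu> (\<Phi> (Suc n)) (\<Psi> (Suc n)) y s" if "(y, s) \<in> D" for y s
        using Suc[rule_format, OF that] Dnn that by (intro Nmono) (auto simp: \<gamma>_def)
      have i1: "integral {0..t} (\<lambda>s. Nl p \<mu> (\<Phi> n) (\<Psi> n) (x + 1 * t - 1 * s) s)
          \<le> integral {0..t} (\<lambda>s. Nl p \<mu> (\<Phi> (Suc n)) (\<Psi> (Suc n)) (x + 1 * t - 1 * s) s)"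
        by (rule integral_le[OF int1[OF xt] int1[OF xt]]) (intro le mem1[OF xt])
      have i2: "integral {0..t} (\<lambda>s. Nl p \<mu> (\<Phi> n) (\<Psi> n) (x + -1 * t - -1 * s) s)
          \<le> integral {0..t} (\<lambda>s. Nl p \<mu> (\<Phi> (Suc n)) (\<Psi> (Suc n)) (x + -1 * t - -1 * s) s)"
        by (rule integral_le[OF int2[OF xt] int2[OF xt]]) (intro le mem2[OF xt])
      have h: "\<Phi> n x t \<le> \<Phi> (Suc n) x t" "\<gamma>1 \<le> \<Phi> n x t" "\<Psi> n x t \<le> \<Psi> (Suc n) x t" "\<gamma>2 \<le> \<Psi> n x t"
        using Suc[rule_format, OF xt] by auto
      show "\<Phi> (Suc n) (fst (x, t)) (snd (x, t)) \<le> \<Phi> (Suc (Suc n)) (fst (x, t)) (snd (x, t)) \<and> \<gamma>1 \<le> \<Phi> (Suc n) (fst (x, t)) (snd (x, t))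
        \<and> \<Psi> (Suc n) (fst (x, t)) (snd (x, t)) \<le> \<Psi> (Suc (Suc n)) (fst (x, t)) (snd (x, t)) \<and> \<gamma>2 \<le> \<Psi> (Suc n) (fst (x, t)) (snd (x, t))"
        using h i1 i2 unfolding fst_conv snd_conv \<Phi>S[of "Suc n"] \<Psi>S[of "Suc n"] \<Phi>S[of n] \<Psi>S[of n]
        by linarith
    qed
  qed
  have KD: "Kset R T \<subseteq> D" by (auto simp: Kset_def D_def DD_def)
  show ?thesis
  proof (intro allI ballI, clarify)
    fix n x t assume "(x,t) \<in> Kset R T"
    hence "(x,t) \<in> D" using KD by auto
    from mono[of n, rule_format, OF this] assms(6,7) show
      "fst (iter p \<mu> \<gamma>1 \<gamma>2 f g n) x t \<le> fst (iter p \<mu> \<gamma>1 \<gamma>2 f g (Suc n)) x t \<and>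
       0 \<le> fst (iter p \<mu> \<gamma>1 \<gamma>2 f g n) x t \<and>
       snd (iter p \<mu> \<gamma>1 \<gamma>2 f g n) x t \<le> snd (iter p \<mu> \<gamma>1 \<gamma>2 f g (Suc n)) x t \<and>
       0 \<le> snd (iter p \<mu> \<gamma>1 \<gamma>2 f g n) x t"
      unfolding \<Phi>_def \<Psi>_def by auto
  qed
qed

end
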